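(* Let $n = 2k$ with $k \geq 3$. Then no polygon in the family $\mathcal{A}_n$ of alternating polygons can be convexified by pop operations: for every $P \in \mathcal{A}_n$ and every finite sequence of (well-defined) pop operations applied successively starting from $P$, the resulting polygon is not convex.
   Context: A polygon $P = \{p_1, \ldots, p_n\}$ in the plane is a cyclic sequence of points (vertices), joined by edges $p_i p_{i+1}$, with indices taken modulo $n$ (so $p_{n+1} = p_1$, $p_0 = p_n$); it may be simple or self-intersecting. A pop operation at vertex $p_i$ replaces $p_i$ by its reflection with respect to the line through $p_{i-1}$ and $p_{i+1}$, leaving all other vertices unchanged; it is well-defined only when $p_{i-1} \neq p_{i+1}$. A polygon is convex if it is a simple closed polygon whose boundary bounds a convex region. A polygon can be convexified by pops if some finite sequence of well-defined pop operations transforms it into a convex polygon. Alternating polygons: fix coordinates in the plane and let $n = 2k$. Let $\mathbf{x} = (x_1, \ldots, x_k)$ and $\mathbf{y} = (y_1, \ldots, y_k)$ be vectors in $\mathbb{R}^k$ with $x_i > 0$, $y_i > 0$ for all $i$, and $x_i \neq x_j$, $y_i \neq y_j$ for all $i \neq j$. Let $\sigma = (\sigma_1, \ldots, \sigma_{2k}) \in \{-1, +1\}^{2k}$. The polygon $A(\mathbf{x}, \mathbf{y}, \sigma) = \{p_1, \ldots, p_{2k}\}$ is defined by $p_{2i+1} = (\sigma_{2i+1} x_{i+1}, 0)$ for $i = 0, \ldots, k-1$, and $p_{2i} = (0, \sigma_{2i} y_i)$ for $i = 1, \ldots, k$. The family $\mathcal{A}_n = \mathcal{A}_{2k}$ consists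 of all polygons $A(\mathbf{x}, \mathbf{y}, \sigma)$ for all such $\mathbf{x}, \mathbf{y}, \sigma$. *)

theory Defs
  imports "HOL-Analysis.Analysis"
begin

text \<open>Points of the plane are complex numbers: (a,b) is represented by Complex a b.
  A polygon with n vertices p_1..p_n is a list of length n; list index j (0-based)
  holds p_(j+1); indices are taken modulo n.\<close>

type_synonym polygon = "complex list"

definition prev_idx :: "nat \<Rightarrow> nat \<Rightarrow> nat" where
  "prev_idx n i = (i + n - 1) mod n"

definition next_idx :: "nat \<Rightarrow> nat \<Rightarrow> nat" where
  "next_idx n i = (i + 1) mod n"

definition reflect_line :: "complex \<Rightarrow> complex \<Rightarrow> complex \<Rightarrow> complex" where
  "reflect_line a b z = a + (b - a) * cnj ((z - a) / (b - a))"

definition pop_ok :: "polygon \<Rightarrow> nat \<Rightarrow> bool" where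
  "pop_ok P i \<longleftrightarrow> i < length P \<and>
     P ! prev_idx (length P) i \<noteq> P ! next_idx (length P) i"

definition pop :: "polygon \<Rightarrow> nat \<Rightarrow> polygon" where
  "pop P i = P[i := reflect_line (P ! prev_idx (length P) i) (P ! next_idx (length P) i) (P ! i)]"

inductive pop_reach :: "polygon \<Rightarrow> polygon \<Rightarrow> bool" where
  refl: "pop_reach P P"
| step: "pop_reach P Q \<Longrightarrow> pop_ok Q i \<Longrightarrow> pop_reach P (pop Q i)"

fun polypath :: "complex list \<Rightarrow> real \<Rightarrow> complex" where
  "polypath [] = linepath 0 0"
| "polypath [a] = linepath a a"
| "polypath [a, b] = linepath a b"
| "polypath (a # b # c # rest) = linepath a b +++ polypath (b # c # rest)"

definition closed_polypath :: "polygon \<Rightarrow> real \<Rightarrow> complex" where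
  "closed_polypath P = polypath (P @ [hd P])"

definition convex_polygon :: "polygon \<Rightarrow> bool" where
  "convex_polygon P \<longleftrightarrow> P \<noteq> [] \<and> simple_path (closed_polypath P) \<and>
     convex (inside (path_image (closed_polypath P)))"

text \<open>Alternating polygon A(x,y,sigma), 0-indexed: x 0..x (k-1), y 0..y (k-1), sigma 0..sigma (2k-1),
  where x i = x_(i+1), y i = y_(i+1), sigma j = sigma_(j+1).  List entry 2i is p_(2i+1) =
  (sigma_(2i+1) x_(i+1), 0); list entry 2i+1 is p_(2i+2) = (0, sigma_(2i+2) y_(i+1)).\<close>
definition alt_poly :: "nat \<Rightarrow> (nat \<Rightarrow> real) \<Rightarrow> (nat \<Rightarrow> real) \<Rightarrow> (nat \<Rightarrow> real) \<Rightarrow> polygon" where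
  "alt_poly k x y \<sigma> = map (\<lambda>j. if even j then Complex (\<sigma> j * x (j div 2)) 0
                                   else Complex 0 (\<sigma> j * y (j div 2))) [0..<2*k]"

definition alternating_family :: "nat \<Rightarrow> polygon set" where
  "alternating_family k = {alt_poly k x y \<sigma> | x y \<sigma>.
      (\<forall>i<k. x i > 0 \<and> y i > 0) \<and> inj_on x {..<k} \<and> inj_on y {..<k} \<and>
      (\<forall>j<2*k. \<sigma> j \<in> {-1, 1})}"

end

theory Submission imports Defs begin

lemma refl_im: assumes h: "a \<noteq> b"
  shows "reflect_line (Complex 0 a) (Complex 0 b) (Complex r 0) = Complex (-r) 0"
proof -
  define d where "d = b - a"
  have d: "d \<noteq> 0" using h by (simp add: d_def complex_eq_iff)
  have den: "Complex 0 b - Complex 0 a = Complex 0 d" by (simp add: d_def complex_eq_iff)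
  have num: "Complex r 0 - Complex 0 a = Complex r (-a)" by (simp add: complex_eq_iff)
  have "Complex 0 d \<noteq> 0" using d by (simp add: complex_eq_iff)
  hence q: "Complex r (-a) / Complex 0 d = Complex (-a/d) (-r/d)"
    apply (subst nonzero_divide_eq_eq) using d by (auto simp: complex_eq_iff)
  show ?thesis unfolding reflect_line_def den num q
    using d by (simp add: complex_eq_iff)
qed

lemma refl_re: assumes h: "a \<noteq> b"
  shows "reflect_line (Complex a 0) (Complex b 0) (Complex 0 r) = Complex 0 (-r)"
proof -
  define d where "d = b - a"
  have d: "d \<noteq> 0" using h by (simp add: d_def complex_eq_iff)
  have den: "Complex b 0 - Complex a 0 = Complex d 0" by (simp add: d_def complex_eq_iff)
  have num: "Complex 0 r - Complex a 0 = Complex (-a) r" by (simp add: complex_eq_iff)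
  have "Complex d 0 \<noteq> 0" using d by (simp add: complex_eq_iff)
  hence q: "Complex (-a) r / Complex d 0 = Complex (-a/d) (r/d)"
    apply (subst nonzero_divide_eq_eq) using d by (auto simp: complex_eq_iff)
  show ?thesis unfolding reflect_line_def den num q
    using d by (simp add: complex_eq_iff)
qed


lemma polypath_start: "L \<noteq> [] \<Longrightarrow> pathstart (polypath L) = hd L"
  by (induction L rule: polypath.induct) auto

lemma polypath_finish: "L \<noteq> [] \<Longrightarrow> pathfinish (polypath L) = last L"
  by (induction L rule: polypath.induct) auto

lemma polypath_seg: "Suc j < length L \<Longrightarrow> closed_segment (L!j) (L!Suc j) \<subseteq> path_image (polypath L)"
proof (induction L arbitrary: j rule: polypath.induct)
  case (3 a b)
  then show ?case by auto
next
  case (4 a b c rest)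
  have pj: "path_image (polypath (a # b # c # rest)) = closed_segment a b \<union> path_image (polypath (b # c # rest))"
    by (simp add: path_image_join polypath_start)
  show ?case
  proof (cases j)
    case 0 then show ?thesis using pj by auto
  next
    case (Suc j') then show ?thesis using pj "4.IH"[of j'] "4.prems" by auto
  qed
qed auto

lemma three_mid: fixes r :: "nat \<Rightarrow> real"
  assumes "r 0 \<noteq> r 1" "r 0 \<noteq> r 2" "r 1 \<noteq> r 2"
  shows "\<exists>a m b. a < 3 \<and> m < 3 \<and> b < 3 \<and> r a < r m \<and> r m < r b"
proof -
  have "(r 0 < r 1 \<and> r 1 < r 2) \<or> (r 2 < r 1 \<and> r 1 < r 0) \<or> (r 1 < r 0 \<and> r 0 < r 2) \<or>
        (r 2 < r 0 \<and> r 0 < r 1) \<or> (r 0 < r 2 \<and> r 2 < r 1) \<or> (r 1 < r 2 \<and> r 2 < r 0)"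
    using assms by linarith
  then show ?thesis
  proof (elim disjE)
    assume "r 0 < r 1 \<and> r 1 < r 2" then show ?thesis by (rule_tac x=0 in exI, rule_tac x=1 in exI, rule_tac x=2 in exI) auto
  next
    assume "r 2 < r 1 \<and> r 1 < r 0" then show ?thesis by (rule_tac x=2 in exI, rule_tac x=1 in exI, rule_tac x=0 in exI) auto
  next
    assume "r 1 < r 0 \<and> r 0 < r 2" then show ?thesis by (rule_tac x=1 in exI, rule_tac x=0 in exI, rule_tac x=2 in exI) auto
  next
    assume "r 2 < r 0 \<and> r 0 < r 1" then show ?thesis by (rule_tac x=2 in exI, rule_tac x=0 in exI, rule_tac x=1 in exI) auto
  next
    assume "r 0 < r 2 \<and> r 2 < r 1" then show ?thesis by (rule_tac x=0 in exI, rule_tac x=2 in exI, rule_tac x=1 in exI) auto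
  next
    assume "r 1 < r 2 \<and> r 2 < r 0" then show ?thesis by (rule_tac x=1 in exI, rule_tac x=2 in exI, rule_tac x=0 in exI) auto
  qed
qed

lemma alt_len[simp]: "length (alt_poly k x y \<sigma>) = 2*k"
  by (simp add: alt_poly_def)

lemma alt_nth: "j < 2*k \<Longrightarrow> alt_poly k x y \<sigma> ! j = (if even j then Complex (\<sigma> j * x (j div 2)) 0
                                   else Complex 0 (\<sigma> j * y (j div 2)))"
  by (simp add: alt_poly_def)

lemma prev_cases: "i < n \<Longrightarrow> prev_idx n i = (if i = 0 then n - 1 else i - 1)"
  unfolding prev_idx_def
  by (cases "i = 0") (auto simp: mod_if)

lemma next_cases: "i < n \<Longrightarrow> next_idx n i = (if Suc i = n then 0 else Suc i)"
  unfolding next_idx_def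
  by (auto simp: mod_if)

lemma pop_alt:
  assumes ok: "pop_ok (alt_poly k x y \<sigma>) i"
  shows "pop (alt_poly k x y \<sigma>) i = alt_poly k x y (\<sigma>(i := - \<sigma> i))"
proof -
  let ?L = "alt_poly k x y \<sigma>"
  define p where "p = prev_idx (2*k) i"
  define q where "q = next_idx (2*k) i"
  have i: "i < 2*k" using ok by (simp add: pop_ok_def)
  have ne: "?L ! p \<noteq> ?L ! q" using ok by (simp add: pop_ok_def p_def q_def)
  have pl: "p < 2*k" and ql: "q < 2*k" using i by (auto simp: p_def q_def prev_cases next_cases)
  have par: "(even i \<longrightarrow> odd p \<and> odd q) \<and> (odd i \<longrightarrow> even p \<and> even q)"
    using i by (auto simp: p_def q_def prev_cases next_cases; presburger)
  have newi: "reflect_line (?L ! p) (?L ! q) (?L ! i) = alt_poly k x y (\<sigma>(i := - \<sigma> i)) ! i"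
  proof (cases "even i")
    case True
    then have "odd p" "odd q" using par by auto
    then show ?thesis using True ne i pl ql
      by (simp add: alt_nth refl_im)
  next
    case False
    then have "even p" "even q" using par by auto
    then show ?thesis using False ne i pl ql
      by (simp add: alt_nth refl_re)
  qed
  show ?thesis
  proof (rule nth_equalityI)
    show "length (pop ?L i) = length (alt_poly k x y (\<sigma>(i := - \<sigma> i)))"
      by (simp add: pop_def)
  next
    fix j assume "j < length (pop ?L i)"
    then have j: "j < 2*k" by (simp add: pop_def)
    show "pop ?L i ! j = alt_poly k x y (\<sigma>(i := - \<sigma> i)) ! j"
    proof (cases "j = i")
      case True
      then show ?thesis using newi i by (simp add: pop_def p_def q_def)
    next
      case False
      then show ?thesis using j by (simp add: pop_def alt_nth)
    qed
  qed
qed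

lemma reach_alt:
  assumes "pop_reach P Q" "P = alt_poly k x y \<sigma>" "\<forall>j<2*k. \<sigma> j \<in> {-1, 1}"
  shows "\<exists>\<tau>. Q = alt_poly k x y \<tau> \<and> (\<forall>j<2*k. \<tau> j \<in> {-1, 1})"
  using assms
proof (induction rule: pop_reach.induct)
  case (refl P)
  then show ?case by blast
next
  case (step P Q i)
  then obtain \<tau> where t: "Q = alt_poly k x y \<tau>" "\<forall>j<2*k. \<tau> j \<in> {-1, 1}" by blast
  show ?case
    apply (rule exI[of _ "\<tau>(i := - \<tau> i)"])
    using t step.hyps(2) pop_alt[of k x y \<tau> i] by (auto simp: fun_upd_def)
qed


lemma alt_not_convex:
  assumes k: "k \<ge> 3" and xp: "\<forall>i<k. x i > 0" and xi: "inj_on x {..<k}"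
    and yp: "\<forall>i<k. y i > 0" and sg: "\<forall>j<2*k. \<sigma> j \<in> {-1, 1}"
  shows "\<not> convex_polygon (alt_poly k x y \<sigma>)"
proof
  define L where "L = alt_poly k x y \<sigma>"
  assume cp: "convex_polygon (alt_poly k x y \<sigma>)"
  define \<gamma> where "\<gamma> = closed_polypath L"
  define K where "K = inside (path_image \<gamma>)"
  have Lne: "L \<noteq> []" using k by (simp add: L_def flip: length_greater_0_conv)
  have sp: "simple_path \<gamma>" and cvx: "convex K"
    using cp by (simp_all add: convex_polygon_def L_def \<gamma>_def K_def)
  have cl: "pathfinish \<gamma> = pathstart \<gamma>"
    using Lne by (simp add: \<gamma>_def closed_polypath_def polypath_start polypath_finish)
  have J: "open K" "frontier K = path_image \<gamma>"
    using Jordan_inside_outside[OF sp cl] by (simp_all add: K_def)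
  have seg: "closed_segment (L!j) (L!Suc j) \<subseteq> path_image \<gamma>" if "Suc j < 2*k" for j
    using polypath_seg[of j "L @ [hd L]"] that
    by (simp add: \<gamma>_def closed_polypath_def nth_append L_def)
  have vin: "L!j \<in> path_image \<gamma>" if "j < 2*k" for j
  proof (cases "Suc j < 2*k")
    case True then show ?thesis using seg[of j] by auto
  next
    case False
    then have "j = Suc (j - 1)" "Suc (j-1) < 2*k" using that k by auto
    then show ?thesis using seg[of "j-1"] by (metis ends_in_segment(2) subsetD)
  qed
  define r where "r j = \<sigma> (2*j) * x j" for j
  have vert: "L!(2*j) = Complex (r j) 0" if "j < k" for j
    using that by (simp add: L_def alt_nth r_def)
  have absr: "\<bar>r j\<bar> = x j" if "j < k" for j
  proof -
    have "\<sigma> (2*j) \<in> {-1,1}" using sg that by auto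
    then show ?thesis using xp that by (auto simp: r_def)
  qed
  have rd: "i = j" if "i < k" "j < k" "r i = r j" for i j
    using absr[of i] absr[of j] that xi by (metis inj_onD lessThan_iff)
  have "r 0 \<noteq> r 1" using rd[of 0 1] k by auto
  moreover have "r 0 \<noteq> r 2" using rd[of 0 2] k by auto
  moreover have "r 1 \<noteq> r 2" using rd[of 1 2] k by auto
  ultimately obtain a m b where amb: "a < 3" "m < 3" "b < 3" "r a < r m" "r m < r b"
    using three_mid[of r] by blast
  have ak: "a < k" "m < k" "b < k" using amb k by auto
  define c where "c = \<sigma> (Suc (2*m)) * y m"
  have c0: "c \<noteq> 0"
  proof -
    have "\<sigma> (Suc (2*m)) \<in> {-1,1}" using sg ak by auto
    then show ?thesis using yp ak by (auto simp: c_def)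
  qed
  define A where "A = Complex (r a) 0"
  define B where "B = Complex (r b) 0"
  define M where "M = Complex (r m) 0"
  define Y where "Y = Complex 0 c"
  have Y: "L ! Suc (2*m) = Y"
    using ak by (simp add: L_def alt_nth Y_def c_def)
  have inA: "A \<in> path_image \<gamma>" using vin[of "2*a"] vert[of a] ak by (simp add: A_def)
  have inB: "B \<in> path_image \<gamma>" using vin[of "2*b"] vert[of b] ak by (simp add: B_def)
  have inY: "Y \<in> path_image \<gamma>" using vin[of "Suc (2*m)"] Y ak by simp
  define e where "e = midpoint M Y"
  have "Suc (2*m) < 2*k" using ak by simp
  then have "closed_segment M Y \<subseteq> path_image \<gamma>"
    using seg[of "2*m"] vert[of m] Y ak by (simp add: M_def)
  then have ine: "e \<in> path_image \<gamma>" unfolding e_def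
    using midpoint_in_closed_segment by blast
  have fr: "path_image \<gamma> \<subseteq> closure K" using J by (auto simp: frontier_def)
  have hull: "convex hull {A,B,Y} \<subseteq> closure K"
    by (rule hull_minimal) (use inA inB inY fr convex_closure[OF cvx] in auto)
  have intK: "interior (convex hull {A,B,Y}) \<subseteq> K"
  proof -
    have "interior (convex hull {A,B,Y}) \<subseteq> interior (closure K)" using hull by (rule interior_mono)
    also have "\<dots> = K" using convex_interior_closure[OF cvx] interior_open[OF J(1)] by simp
    finally show ?thesis .
  qed
  have ncol: "\<not> collinear {A,B,Y}"
  proof
    assume "collinear {A,B,Y}"
    then have "collinear {0, A - B, Y - B}" using collinear_3[of A B Y] by (simp add: A_def)
    then have "(Y - B) / (A - B) \<in> \<real>" by (simp add: collinear_iff_Reals)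
    moreover have "A - B = of_real (r a - r b)" by (simp add: A_def B_def complex_eq_iff)
    moreover have "r a - r b \<noteq> 0" using amb by simp
    ultimately have "Im ((Y - B) / of_real (r a - r b)) = 0" by (simp add: complex_is_Real_iff)
    then have "c / (r a - r b) = 0" by (simp add: Y_def B_def)
    then show False using c0 \<open>r a - r b \<noteq> 0\<close> by simp
  qed
  define d where "d = r b - r a"
  have d: "d > 0" using amb by (simp add: d_def)
  define \<alpha> where "\<alpha> = (r b - r m) / (2*d)"
  define \<beta> where "\<beta> = (r m - r a) / (2*d)"
  have "e \<in> interior (convex hull {A,B,Y})"
    unfolding interior_convex_hull_3_minimal[OF ncol DIM_complex]
  proof (simp, intro exI conjI)
    show "0 < \<alpha>" using d amb by (simp add: \<alpha>_def)
    show "0 < \<beta>" using d amb by (simp add: \<beta>_def)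
    show "(0::real) < 1/2" by simp
    have "\<alpha> + \<beta> = ((r b - r m) + (r m - r a)) / (2*d)"
      unfolding \<alpha>_def \<beta>_def by (rule add_divide_distrib[symmetric])
    also have "\<dots> = d / (2*d)" by (simp add: d_def)
    also have "\<dots> = 1/2" using d by simp
    finally show "\<alpha> + \<beta> + 1/2 = 1" by simp
    have num: "(r b - r m) * r a + (r m - r a) * r b = r m * d" by (simp add: d_def algebra_simps)
    have "\<alpha> * r a + \<beta> * r b = ((r b - r m) * r a + (r m - r a) * r b) / (2*d)"
      using d by (simp add: \<alpha>_def \<beta>_def field_simps)
    also have "\<dots> = r m * d / (2*d)" by (simp only: num)
    also have "\<dots> = r m / 2" using d by simp
    finally have re: "\<alpha> * r a + \<beta> * r b = r m / 2" .
    show "\<alpha> *\<^sub>R A + \<beta> *\<^sub>R B + (1/2) *\<^sub>R Y = e"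
      using re by (simp add: e_def midpoint_def A_def B_def Y_def M_def complex_eq_iff)
  qed
  with intK have "e \<in> K" by blast
  with ine show False using inside_no_overlap[of "path_image \<gamma>"] unfolding K_def by blast
qed


theorem theorem1:
  fixes k :: nat and P Q :: polygon
  assumes "k \<ge> 3"
    and "P \<in> alternating_family k"
    and "pop_reach P Q"
  shows "\<not> convex_polygon Q"
proof -
  obtain x y \<sigma> where P: "P = alt_poly k x y \<sigma>" and c: "\<forall>i<k. x i > 0 \<and> y i > 0"
    "inj_on x {..<k}" "\<forall>j<2*k. \<sigma> j \<in> {-1, 1}"
    using assms(2) unfolding alternating_family_def by blast
  obtain \<tau> where "Q = alt_poly k x y \<tau>" "\<forall>j<2*k. \<tau> j \<in> {-1, 1}"
    using reach_alt[OF assms(3) P c(3)] by blast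
  then show ?thesis using alt_not_convex[of k x y \<tau>] assms(1) c by auto
qed

end
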